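(* Let $n\ge2$ and let $Q_0\subset\mathbb{R}^n$ be a cube. For $N$ sufficiently large (namely $2^{(N-1)n}>|Q_0|$), $$s_N(M^{p,\alpha})\lesssim\begin{cases}2^{-N(\frac2n-\frac1p)\frac n2}N^{-\frac\alpha2},& p>\frac n2,\ \alpha\in\mathbb{R},\\ N^{\frac{1-\alpha}2},& p=\frac n2,\ \alpha>1,\end{cases}$$ with implicit constants independent of $N$.
   Context: Cubes have sides parallel to axes; $\mathcal{D}(Q_0)$ is the family of dyadic subcubes of $Q_0$. A countable $\mathcal{Q}=(Q_i)\subset\mathcal{D}(Q_0)$ is sparse if there exist pairwise disjoint measurable $E_{Q_i}\subseteq Q_i$ with $|E_{Q_i}|\ge\frac12|Q_i|$; $S(Q_0)$ is the set of sparse families. For $f\in L^1(Q_0)$, $s_N(f)=\sup_{\mathcal{Q}\in S(Q_0)}\big[\sum_{Q\in\mathcal{Q},\,\ell(Q)\le2^{-(N-1)}\ell(Q_0)}\big(|Q|^{\frac1n-\frac12}\int_Q|f|\big)^2\big]^{1/2}$. For $1\le p\le\infty$, $\alpha\in\mathbb{R}$, the Morrey space $M^{p,\alpha}(Q_0)$ is normed by $\|f\|_{M^{p,\alpha}(Q_0)}=\sup_{Q\in\mathcal{D}(Q_0)}(1-(\log|Q|)_-)^\alpha|Q|^{-1/p'}\int_Q|f|$, where $(a)_-=\min\{a,0\}$ and $p'$ is the dual exponent; $s_N(M^{p,\alpha})=\sup\{s_N(f):\|f\|_{M^{p,\alpha}(Q_0)}\le1\}$. *)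

theory Defs
  imports "HOL-Analysis.Analysis"
begin

definition cube0 :: "real^'n \<Rightarrow> real \<Rightarrow> (real^'n) set" where
  "cube0 a l = cbox a (a + l *\<^sub>R (\<chi> i. 1))"

definition dyadic_cubes :: "real^'n \<Rightarrow> real \<Rightarrow> (real^'n) set set" where
  "dyadic_cubes a l =
     {cbox (a + (l / 2 ^ k) *\<^sub>R j) (a + (l / 2 ^ k) *\<^sub>R (j + (\<chi> i. 1))) | k j.
        \<forall>i. j $ i \<in> \<int> \<and> 0 \<le> j $ i \<and> j $ i < 2 ^ k}"

definition cube_side :: "(real^'n) set \<Rightarrow> real" where
  "cube_side Q = measure lebesgue Q powr (1 / real CARD('n))"

definition sparse_family :: "real^'n \<Rightarrow> real \<Rightarrow> (real^'n) set set \<Rightarrow> bool" where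
  "sparse_family a l \<Q> \<longleftrightarrow> countable \<Q> \<and> \<Q> \<subseteq> dyadic_cubes a l \<and>
     (\<exists>E. (\<forall>Q\<in>\<Q>. E Q \<in> sets lebesgue \<and> E Q \<subseteq> Q \<and>
              measure lebesgue (E Q) \<ge> 1/2 * measure lebesgue Q) \<and>
          (\<forall>Q\<in>\<Q>. \<forall>Q'\<in>\<Q>. Q \<noteq> Q' \<longrightarrow> E Q \<inter> E Q' = {}))"

text \<open>The square of s_N(f): supremum over sparse families of the (nonnegative, possibly
  infinite) sum, the sum written as supremum of its finite partial sums.\<close>

definition sN_sq :: "real^'n \<Rightarrow> real \<Rightarrow> nat \<Rightarrow> (real^'n \<Rightarrow> real) \<Rightarrow> ereal" where
  "sN_sq a l N f =
     (SUP \<Q> \<in> Collect (sparse_family a l).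
        SUP F \<in> {F. finite F \<and> F \<subseteq> {Q \<in> \<Q>. cube_side Q \<le> 2 powr (- (real N - 1)) * l}}.
          ereal (\<Sum>Q\<in>F. (measure lebesgue Q powr (1 / real CARD('n) - 1/2)
                             * integral Q (\<lambda>x. \<bar>f x\<bar>))\<^sup>2))"

definition sN :: "real^'n \<Rightarrow> real \<Rightarrow> nat \<Rightarrow> (real^'n \<Rightarrow> real) \<Rightarrow> ereal" where
  "sN a l N f = (if sN_sq a l N f = \<infinity> then \<infinity> else ereal (sqrt (real_of_ereal (sN_sq a l N f))))"

definition pinv :: "ereal \<Rightarrow> real" where
  "pinv p = (if p = \<infinity> then 0 else 1 / real_of_ereal p)"

text \<open>Morrey norm; |Q|^(-1/p') = |Q|^(-(1 - 1/p)); log is the natural logarithm.\<close>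

definition morrey_norm :: "real^'n \<Rightarrow> real \<Rightarrow> ereal \<Rightarrow> real \<Rightarrow> (real^'n \<Rightarrow> real) \<Rightarrow> ereal" where
  "morrey_norm a l p \<alpha> f =
     (SUP Q \<in> dyadic_cubes a l.
        ereal ((1 - min (ln (measure lebesgue Q)) 0) powr \<alpha>
               * measure lebesgue Q powr (- (1 - pinv p))
               * integral Q (\<lambda>x. \<bar>f x\<bar>)))"

definition sN_morrey :: "real^'n \<Rightarrow> real \<Rightarrow> nat \<Rightarrow> ereal \<Rightarrow> real \<Rightarrow> ereal" where
  "sN_morrey a l N p \<alpha> =
     (SUP f \<in> {f. f absolutely_integrable_on cube0 a l \<and> morrey_norm a l p \<alpha> f \<le> 1}. sN a l N f)"

end

theory Submission
  imports Defs
begin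

definition dc :: "real^'n \<Rightarrow> real \<Rightarrow> nat \<Rightarrow> real^'n \<Rightarrow> (real^'n) set" where
  "dc a l k j = cbox (a + (l / 2 ^ k) *\<^sub>R j) (a + (l / 2 ^ k) *\<^sub>R (j + (\<chi> i. 1)))"

definition okj :: "nat \<Rightarrow> real^'n \<Rightarrow> bool" where
  "okj k j \<longleftrightarrow> (\<forall>i. j $ i \<in> \<int> \<and> 0 \<le> j $ i \<and> j $ i < 2 ^ k)"

lemma dyadic_cubes_iff: "Q \<in> dyadic_cubes a l \<longleftrightarrow> (\<exists>k j. okj k j \<and> Q = dc a l k j)"
  unfolding dyadic_cubes_def dc_def okj_def by blast

lemma mem_dc: "x \<in> dc a l k j \<longleftrightarrow>
   (\<forall>i. a $ i + (l / 2 ^ k) * j $ i \<le> x $ i \<and> x $ i \<le> a $ i + (l / 2 ^ k) * (j $ i + 1))"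
  by (simp add: dc_def mem_box_cart)

lemma dc_measure:
  fixes a j :: "real^'n"
  assumes "l > 0"
  shows "measure lebesgue (dc a l k j) = (l / 2 ^ k) ^ CARD('n)"
proof -
  let ?h = "l / 2 ^ k"
  have h: "?h > 0" using assms by simp
  have ne: "dc a l k j \<noteq> {}"
    unfolding dc_def using h by (auto simp: interval_eq_empty_cart algebra_simps)
  have "measure lebesgue (dc a l k j) = (\<Prod>i\<in>(UNIV::'n set). ?h)"
    using content_cbox_cart[OF ne[unfolded dc_def]] unfolding dc_def by (simp add: algebra_simps)
  then show ?thesis by simp
qed

lemma dc_sub:
  fixes a j :: "real^'n"
  assumes "l > 0" "okj k j"
  shows "dc a l k j \<subseteq> cube0 a l"
proof
  fix x assume x: "x \<in> dc a l k j"
  let ?h = "l / 2 ^ k"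
  have h: "?h > 0" using assms by simp
  show "x \<in> cube0 a l"
    unfolding cube0_def mem_box_cart
  proof
    fix i
    obtain m where m: "j $ i = of_int m" using assms(2) unfolding okj_def by (meson Ints_cases)
    have "m < 2 ^ k" using assms(2) m unfolding okj_def
      by (metis of_int_less_iff of_int_numeral of_int_power)
    then have "m + 1 \<le> 2 ^ k" by simp
    then have "real_of_int m + 1 \<le> 2 ^ k"
      by (metis of_int_add of_int_le_iff of_int_numeral of_int_power of_int_1)
    then have "?h * (j $ i + 1) \<le> ?h * 2 ^ k" using h m by (intro mult_left_mono) auto
    also have "\<dots> = l" by simp
    finally have up: "?h * (j $ i + 1) \<le> l" .
    have "0 \<le> j $ i" using assms(2) unfolding okj_def by simp
    then have lo: "0 \<le> ?h * j $ i" using mult_nonneg_nonneg[OF less_imp_le[OF h]] by blast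
    from x have "a $ i + ?h * j $ i \<le> x $ i \<and> x $ i \<le> a $ i + ?h * (j $ i + 1)"
      unfolding mem_dc by blast
    then show "a $ i \<le> x $ i \<and> x $ i \<le> (a + l *\<^sub>R (\<chi> i. 1)) $ i"
      using up lo by auto
  qed
qed

lemma dc_neg:
  fixes a j j' :: "real^'n"
  assumes "l > 0" "okj k j" "okj k j'" "j \<noteq> j'"
  shows "negligible (dc a l k j \<inter> dc a l k j')"
proof -
  let ?h = "l / 2 ^ k"
  have h: "?h > 0" using assms by simp
  obtain i where i: "j $ i \<noteq> j' $ i" using assms(4) by (metis vec_eq_iff)
  obtain m where m: "j $ i = of_int m" using assms(2) unfolding okj_def by (meson Ints_cases)
  obtain m' where m': "j' $ i = of_int m'" using assms(3) unfolding okj_def by (meson Ints_cases)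
  define c where "c = a $ i + ?h * max (j $ i) (j' $ i)"
  have "dc a l k j \<inter> dc a l k j' \<subseteq> {x. x \<bullet> axis i 1 = c}"
  proof
    fix x assume x: "x \<in> dc a l k j \<inter> dc a l k j'"
    then have A: "a $ i + ?h * j $ i \<le> x $ i \<and> x $ i \<le> a $ i + ?h * (j $ i + 1)"
          and B: "a $ i + ?h * j' $ i \<le> x $ i \<and> x $ i \<le> a $ i + ?h * (j' $ i + 1)"
      unfolding Int_iff mem_dc by blast+
    have "x $ i = c"
    proof (cases "m < m'")
      case True
      then have "j $ i + 1 \<le> j' $ i" using m m'
        by (metis of_int_1 of_int_add of_int_le_iff zless_imp_add1_zle)
      then have "?h * (j $ i + 1) \<le> ?h * j' $ i" using h by (intro mult_left_mono) auto
      then show ?thesis using A B True m m' unfolding c_def by (auto simp: max_def)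
    next
      case False
      then have "m' < m" using i m m' by auto
      then have "j' $ i + 1 \<le> j $ i" using m m'
        by (metis of_int_1 of_int_add of_int_le_iff zless_imp_add1_zle)
      then have "?h * (j' $ i + 1) \<le> ?h * j $ i" using h by (intro mult_left_mono) auto
      then show ?thesis using A B \<open>m' < m\<close> m m' unfolding c_def by (auto simp: max_def)
    qed
    then show "x \<in> {x. x \<bullet> axis i 1 = c}" by (simp add: cart_eq_inner_axis[symmetric])
  qed
  moreover have "negligible {x::real^'n. x \<bullet> axis i 1 = c}"
    by (rule negligible_standard_hyperplane) (simp add: Basis_vec_def; blast)
  ultimately show ?thesis by (rule negligible_subset[rotated])
qed

lemma abs_integrable_cube:
  fixes f :: "real^'n \<Rightarrow> real"
  assumes "f absolutely_integrable_on S"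
  shows "(\<lambda>x. \<bar>f x\<bar>) integrable_on S"
  using assms unfolding absolutely_integrable_on_def by simp

lemma level_sum:
  fixes a :: "real^'n" and f :: "real^'n \<Rightarrow> real"
  assumes l: "l > 0" and f: "f absolutely_integrable_on cube0 a l" and G: "finite G"
    and GQ: "\<forall>Q\<in>G. \<exists>j. okj k j \<and> Q = dc a l k j"
  shows "(\<Sum>Q\<in>G. integral Q (\<lambda>x. \<bar>f x\<bar>)) \<le> integral (cube0 a l) (\<lambda>x. \<bar>f x\<bar>)"
proof -
  let ?g = "\<lambda>x. \<bar>f x\<bar>"
  have g0: "?g integrable_on cube0 a l" using abs_integrable_cube[OF f] .
  have sub: "Q \<subseteq> cube0 a l" if "Q \<in> G" for Q
    using GQ that dc_sub[OF l] by blast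
  have intQ: "?g integrable_on Q" if "Q \<in> G" for Q
  proof -
    obtain j where "okj k j" "Q = dc a l k j" using GQ \<open>Q \<in> G\<close> by blast
    then show ?thesis using integrable_on_subcbox[OF g0] sub[OF that] unfolding dc_def by blast
  qed
  have pw: "pairwise (\<lambda>S S'. negligible (S \<inter> S')) G"
  proof (rule pairwiseI)
    fix S S' assume "S \<in> G" "S' \<in> G" "S \<noteq> S'"
    then obtain j j' where "okj k j" "S = dc a l k j" "okj k j'" "S' = dc a l k j'" using GQ by meson
    then show "negligible (S \<inter> S')" using dc_neg[OF l] \<open>S \<noteq> S'\<close> by blast
  qed
  have hU: "(?g has_integral (\<Sum>Q\<in>G. integral Q ?g)) (\<Union>G)"
    by (rule has_integral_Union[OF G _ pw]) (use intQ in blast)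
  then have "(\<Sum>Q\<in>G. integral Q ?g) = integral (\<Union>G) ?g" by (simp add: integral_unique)
  also have "\<dots> \<le> integral (cube0 a l) ?g"
    by (rule integral_subset_le) (use sub hU g0 in auto)
  finally show ?thesis .
qed

definition wk :: "nat \<Rightarrow> real \<Rightarrow> real \<Rightarrow> real \<Rightarrow> nat \<Rightarrow> real" where
  "wk d l s \<alpha> k = ((l / 2 ^ k) ^ d) powr s * (1 - min (ln ((l / 2 ^ k) ^ d)) 0) powr (- \<alpha>)"

lemma wk_nonneg: "wk d l s \<alpha> k \<ge> 0"
  unfolding wk_def by simp

lemma morrey_bound:
  fixes a :: "real^'n" and f :: "real^'n \<Rightarrow> real"
  assumes "morrey_norm a l p \<alpha> f \<le> 1" "Q \<in> dyadic_cubes a l"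
    and m: "measure lebesgue Q > 0"
  shows "integral Q (\<lambda>x. \<bar>f x\<bar>) \<le> measure lebesgue Q powr (1 - pinv p)
            * (1 - min (ln (measure lebesgue Q)) 0) powr (- \<alpha>)"
proof -
  let ?m = "measure lebesgue Q" and ?L = "1 - min (ln (measure lebesgue Q)) 0"
  let ?I = "integral Q (\<lambda>x. \<bar>f x\<bar>)"
  have "ereal (?L powr \<alpha> * ?m powr (- (1 - pinv p)) * ?I) \<le> morrey_norm a l p \<alpha> f"
    unfolding morrey_norm_def using assms(2) by (rule SUP_upper)
  also have "\<dots> \<le> 1" by fact
  finally have le: "?L powr \<alpha> * ?m powr (- (1 - pinv p)) * ?I \<le> 1"
    by (simp add: one_ereal_def)
  have L: "?L > 0" by simp
  have X: "?L powr \<alpha> * ?m powr (- (1 - pinv p)) > 0" using L m by simp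
  have "?I \<le> 1 / (?L powr \<alpha> * ?m powr (- (1 - pinv p)))"
    using le X by (simp add: field_simps)
  also have "\<dots> = ?m powr (1 - pinv p) * ?L powr (- \<alpha>)"
    using L m by (simp add: powr_minus field_simps) (simp add: powr_add[symmetric])
  finally show ?thesis .
qed

lemma term_bound:
  fixes m L A e \<pi> \<alpha> :: real
  assumes m: "m > 0" and L: "L > 0" and A0: "0 \<le> A"
    and A: "A \<le> m powr (1 - \<pi>) * L powr (- \<alpha>)"
  shows "(m powr (e - 1/2) * A)\<^sup>2 \<le> m powr (2 * e - \<pi>) * L powr (- \<alpha>) * A"
proof -
  have "(m powr (e - 1/2) * A)\<^sup>2 = m powr (2 * e - 1) * A * A"
    using m by (simp add: power2_eq_square powr_add[symmetric] algebra_simps)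
  also have "\<dots> \<le> m powr (2 * e - 1) * (m powr (1 - \<pi>) * L powr (- \<alpha>)) * A"
    using A A0 by (intro mult_right_mono mult_left_mono) auto
  also have "\<dots> = m powr (2 * e - \<pi>) * L powr (- \<alpha>) * A"
    using m by (simp add: powr_add[symmetric] algebra_simps)
  finally show ?thesis .
qed

lemma pow_powr_inv:
  fixes x :: real assumes "x > 0" "d > 0"
  shows "(x ^ d) powr (1 / real d) = x"
proof -
  have "(x ^ d) powr (1 / real d) = (x powr real d) powr (1 / real d)"
    using assms by (simp add: powr_realpow)
  also have "\<dots> = x" using assms by (simp add: powr_powr)
  finally show ?thesis .
qed

lemma F_bound:
  fixes a :: "real^'n" and f :: "real^'n \<Rightarrow> real"
  assumes l: "l > 0" and f: "f absolutely_integrable_on cube0 a l"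
    and mor: "morrey_norm a l p \<alpha> f \<le> 1" and N: "N \<ge> 1"
    and F: "finite F" "F \<subseteq> dyadic_cubes a l"
    and side: "\<forall>Q\<in>F. cube_side Q \<le> 2 powr (- (real N - 1)) * l"
  shows "\<exists>M. (\<Sum>Q\<in>F. (measure lebesgue Q powr (1 / real CARD('n) - 1/2)
                             * integral Q (\<lambda>x. \<bar>f x\<bar>))\<^sup>2)
          \<le> integral (cube0 a l) (\<lambda>x. \<bar>f x\<bar>)
             * (\<Sum>k\<in>{N-1..M}. wk CARD('n) l (2 / real CARD('n) - pinv p) \<alpha> k)"
proof -
  let ?d = "CARD('n)"
  let ?g = "\<lambda>x. \<bar>f x\<bar>"
  let ?I0 = "integral (cube0 a l) ?g"
  let ?w = "wk ?d l (2 / real ?d - pinv p) \<alpha>"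
  define lev where "lev Q = (SOME k. \<exists>j. okj k j \<and> Q = dc a l k j)" for Q
  have levQ: "\<exists>j. okj (lev Q) j \<and> Q = dc a l (lev Q) j" if "Q \<in> F" for Q
  proof -
    have "\<exists>k j. okj k j \<and> Q = dc a l k j" using F(2) that dyadic_cubes_iff by blast
    then show ?thesis unfolding lev_def by (rule someI_ex)
  qed
  have meas: "measure lebesgue Q = (l / 2 ^ lev Q) ^ ?d" if "Q \<in> F" for Q
    using levQ[OF that] dc_measure[OF l] by metis
  have d0: "?d > 0" by simp
  have levge: "N - 1 \<le> lev Q" if "Q \<in> F" for Q
  proof -
    have "cube_side Q = l / 2 ^ lev Q"
      unfolding cube_side_def meas[OF that] using l d0 by (intro pow_powr_inv) auto
    moreover have "cube_side Q \<le> 2 powr (- (real N - 1)) * l" using side that by blast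
    ultimately have "l / 2 ^ lev Q \<le> 2 powr (- (real N - 1)) * l" by simp
    also have "2 powr (- (real N - 1)) = 1 / 2 ^ (N - 1)"
    proof -
      have e: "real N - 1 = real (N - 1)" using N by simp
      have "2 powr (real N - 1) = 2 ^ (N - 1)" unfolding e by (rule powr_realpow) simp
      moreover have "2 powr (- (real N - 1)) = 1 / 2 powr (real N - 1)" by (rule powr_minus_divide)
      ultimately show ?thesis by simp
    qed
    finally have le: "l / 2 ^ lev Q \<le> 1 / 2 ^ (N - 1) * l" .
    show ?thesis
    proof (rule ccontr)
      assume "\<not> N - 1 \<le> lev Q"
      then have "(2::real) ^ lev Q < 2 ^ (N - 1)" by (intro power_strict_increasing) auto
      then have "l / 2 ^ (N - 1) < l / 2 ^ lev Q" using l by (intro divide_strict_left_mono) auto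
      moreover have "1 / 2 ^ (N - 1) * l = l / 2 ^ (N - 1)" by simp
      ultimately show False using le by linarith
    qed
  qed
  have g0: "?g integrable_on cube0 a l" using abs_integrable_cube[OF f] .
  have intQ: "?g integrable_on Q" if Q: "Q \<in> F" for Q
  proof -
    obtain j where "okj (lev Q) j" "Q = dc a l (lev Q) j" using levQ[OF Q] by blast
    then show ?thesis using integrable_on_subcbox[OF g0] dc_sub[OF l] unfolding dc_def by metis
  qed
  have A0: "0 \<le> integral Q ?g" if "Q \<in> F" for Q
    using intQ[OF that] by (rule integral_nonneg) auto
  have tb: "(measure lebesgue Q powr (1 / real ?d - 1/2) * integral Q ?g)\<^sup>2
              \<le> ?w (lev Q) * integral Q ?g" if Q: "Q \<in> F" for Q
  proof -
    have m: "measure lebesgue Q > 0" using meas[OF Q] l by simp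
    have "(measure lebesgue Q powr (1 / real ?d - 1/2) * integral Q ?g)\<^sup>2
        \<le> measure lebesgue Q powr (2 * (1 / real ?d) - pinv p)
           * (1 - min (ln (measure lebesgue Q)) 0) powr (- \<alpha>) * integral Q ?g"
      by (rule term_bound[OF m _ A0[OF Q] morrey_bound[OF mor _ m]])
         (use Q F(2) in auto)
    also have "\<dots> = ?w (lev Q) * integral Q ?g"
      unfolding wk_def meas[OF Q] by (simp only: times_divide_eq_right mult_1_right)
    finally show ?thesis .
  qed
  define M where "M = Max (insert 0 (lev ` F))"
  have levle: "lev Q \<le> M" if "Q \<in> F" for Q
    unfolding M_def using F(1) that by (intro Max_ge) auto
  have sub: "lev ` F \<subseteq> {N-1..M}" using levge levle by auto
  have "(\<Sum>Q\<in>F. (measure lebesgue Q powr (1 / real ?d - 1/2) * integral Q ?g)\<^sup>2)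
        \<le> (\<Sum>Q\<in>F. ?w (lev Q) * integral Q ?g)"
    by (rule sum_mono) (rule tb)
  also have "\<dots> = (\<Sum>k\<in>{N-1..M}. \<Sum>Q\<in>{Q. Q \<in> F \<and> lev Q = k}. ?w (lev Q) * integral Q ?g)"
    by (rule sum.group[symmetric]) (use F(1) sub in auto)
  also have "\<dots> = (\<Sum>k\<in>{N-1..M}. ?w k * (\<Sum>Q\<in>{Q. Q \<in> F \<and> lev Q = k}. integral Q ?g))"
  proof (rule sum.cong[OF refl])
    fix k
    have "(\<Sum>Q\<in>{Q. Q \<in> F \<and> lev Q = k}. ?w (lev Q) * integral Q ?g)
        = (\<Sum>Q\<in>{Q. Q \<in> F \<and> lev Q = k}. ?w k * integral Q ?g)"
      by (rule sum.cong) simp_all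
    then show "(\<Sum>Q\<in>{Q. Q \<in> F \<and> lev Q = k}. ?w (lev Q) * integral Q ?g)
        = ?w k * (\<Sum>Q\<in>{Q. Q \<in> F \<and> lev Q = k}. integral Q ?g)"
      by (simp only: sum_distrib_left)
  qed
  also have "\<dots> \<le> (\<Sum>k\<in>{N-1..M}. ?w k * ?I0)"
  proof (rule sum_mono)
    fix k assume "k \<in> {N-1..M}"
    have "(\<Sum>Q\<in>{Q. Q \<in> F \<and> lev Q = k}. integral Q ?g) \<le> ?I0"
      by (rule level_sum[OF l f, where k=k]) (use F(1) levQ in auto)
    then show "?w k * (\<Sum>Q\<in>{Q. Q \<in> F \<and> lev Q = k}. integral Q ?g) \<le> ?w k * ?I0"
      by (intro mult_left_mono wk_nonneg)
  qed
  also have "\<dots> = ?I0 * (\<Sum>k\<in>{N-1..M}. ?w k)"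
    by (simp add: sum_distrib_left mult.commute)
  finally show ?thesis by (rule exI)
qed



lemma gp_bound:
  fixes r :: real assumes "0 \<le> r" "r < 1"
  shows "(\<Sum>j<J. r ^ j) \<le> 1 / (1 - r)"
proof -
  have "(\<Sum>j<J. r ^ j) = (1 - r ^ J) / (1 - r)" using assms by (simp add: sum_gp_strict)
  also have "\<dots> \<le> 1 / (1 - r)" using assms by (intro divide_right_mono) auto
  finally show ?thesis .
qed

lemma one_plus_powr_le:
  fixes x \<beta> \<delta> :: real
  assumes "x \<ge> 0" "\<beta> \<ge> 0" "0 < \<delta>" "\<delta> \<le> 1"
  shows "(1 + x) powr \<beta> \<le> \<delta> powr (- \<beta>) * exp (\<delta> * \<beta> * x)"
proof -
  have "1 + x \<le> (1 + \<delta> * x) / \<delta>" using assms by (simp add: field_simps mult_left_le_one_le)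
  also have "1 + \<delta> * x \<le> exp (\<delta> * x)" by (rule exp_ge_add_one_self)
  finally have "1 + x \<le> exp (\<delta> * x) / \<delta>" using assms by (simp add: divide_right_mono)
  then have "(1 + x) powr \<beta> \<le> (exp (\<delta> * x) / \<delta>) powr \<beta>"
    using assms by (intro powr_mono2) auto
  also have "\<dots> = \<delta> powr (- \<beta>) * exp (\<delta> * \<beta> * x)"
    using assms by (simp add: powr_def ln_div exp_add[symmetric] algebra_simps)
  finally show ?thesis .
qed

lemma L_ratio:
  fixes A b x \<alpha> :: real
  assumes "A \<ge> 1" "x \<ge> 0"
  shows "(A + x) powr (- \<alpha>) \<le> A powr (- \<alpha>) * (1 + x) powr (max (- \<alpha>) 0)"
proof (cases "\<alpha> \<ge> 0")
  case True
  then have "(A + x) powr (- \<alpha>) \<le> A powr (- \<alpha>)" using assms by (intro powr_mono2') auto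
  then show ?thesis using True assms by simp
next
  case False
  have "x \<le> A * x" using assms mult_right_mono[of 1 A x] by simp
  then have "A + x \<le> A * (1 + x)" by (simp add: algebra_simps)
  then have "(A + x) powr (- \<alpha>) \<le> (A * (1 + x)) powr (- \<alpha>)" using assms False
    by (intro powr_mono2) auto
  then show ?thesis using False assms by (simp add: powr_mult)
qed

lemma case1_sum:
  fixes A b q \<alpha> :: real
  assumes A: "A \<ge> 1" and b: "b > 0" and q: "q > 0"
  defines "\<beta> \<equiv> max (- \<alpha>) 0"
  defines "\<delta> \<equiv> (if \<beta> = 0 then 1 else min 1 (q / (2 * \<beta> * b)))"
  shows "(\<Sum>j<J. exp (- q * real j) * (A + b * real j) powr (- \<alpha>))
           \<le> A powr (- \<alpha>) * (\<delta> powr (- \<beta>) / (1 - exp (- q / 2)))"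
proof -
  have \<beta>0: "\<beta> \<ge> 0" unfolding \<beta>_def by simp
  have \<delta>0: "0 < \<delta>" "\<delta> \<le> 1" unfolding \<delta>_def using q b \<beta>0 by auto
  have \<delta>\<beta>: "\<delta> * \<beta> * b \<le> q / 2"
  proof (cases "\<beta> = 0")
    case True then show ?thesis using q by simp
  next
    case False
    then have "\<beta> > 0" using \<beta>0 by simp
    have "\<delta> \<le> q / (2 * \<beta> * b)" unfolding \<delta>_def using False by simp
    then have "\<delta> * (\<beta> * b) \<le> q / (2 * \<beta> * b) * (\<beta> * b)"
      using \<open>\<beta> > 0\<close> b by (intro mult_right_mono) auto
    also have "\<dots> = q / 2" using \<open>\<beta> > 0\<close> b by (simp add: field_simps)
    finally show ?thesis by (simp add: mult.assoc)
  qed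
  let ?r = "exp (- q / 2)"
  have tj: "exp (- q * real j) * (A + b * real j) powr (- \<alpha>)
              \<le> A powr (- \<alpha>) * \<delta> powr (- \<beta>) * ?r ^ j" for j
  proof -
    have bj: "b * real j \<ge> 0" using b by simp
    have "(A + b * real j) powr (- \<alpha>) \<le> A powr (- \<alpha>) * (1 + b * real j) powr \<beta>"
      unfolding \<beta>_def by (rule L_ratio[OF A bj])
    also have "\<dots> \<le> A powr (- \<alpha>) * (\<delta> powr (- \<beta>) * exp (\<delta> * \<beta> * (b * real j)))"
      by (intro mult_left_mono one_plus_powr_le bj \<beta>0 \<delta>0) simp
    finally have "exp (- q * real j) * (A + b * real j) powr (- \<alpha>)
        \<le> exp (- q * real j) * (A powr (- \<alpha>) * (\<delta> powr (- \<beta>) * exp (\<delta> * \<beta> * (b * real j))))"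
      by (intro mult_left_mono) auto
    also have "\<dots> = A powr (- \<alpha>) * \<delta> powr (- \<beta>) * exp (- q * real j + \<delta> * \<beta> * b * real j)"
    proof -
      have "exp (- q * real j + \<delta> * \<beta> * b * real j) = exp (- q * real j) * exp (\<delta> * \<beta> * (b * real j))"
        by (simp add: exp_add[symmetric] algebra_simps)
      then show ?thesis by simp
    qed
    also have "\<dots> \<le> A powr (- \<alpha>) * \<delta> powr (- \<beta>) * exp (- q / 2 * real j)"
    proof -
      have "\<delta> * \<beta> * b * real j \<le> q / 2 * real j" using \<delta>\<beta> by (intro mult_right_mono) auto
      then show ?thesis by (intro mult_left_mono) auto
    qed
    also have "exp (- q / 2 * real j) = ?r ^ j"
      by (simp add: exp_of_nat_mult[symmetric] mult.commute)
    finally show ?thesis .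
  qed
  have "(\<Sum>j<J. exp (- q * real j) * (A + b * real j) powr (- \<alpha>))
        \<le> (\<Sum>j<J. A powr (- \<alpha>) * \<delta> powr (- \<beta>) * ?r ^ j)"
    by (rule sum_mono) (rule tj)
  also have "\<dots> = A powr (- \<alpha>) * \<delta> powr (- \<beta>) * (\<Sum>j<J. ?r ^ j)"
    by (simp add: sum_distrib_left)
  also have "\<dots> \<le> A powr (- \<alpha>) * \<delta> powr (- \<beta>) * (1 / (1 - ?r))"
    using q by (intro mult_left_mono gp_bound) auto
  finally show ?thesis by simp
qed

lemma mvt_step:
  fixes y b \<alpha> :: real
  assumes y: "y > 0" and b: "b > 0" and \<alpha>: "\<alpha> > 1"
  shows "b * (\<alpha> - 1) * (y + b) powr (- \<alpha>) \<le> y powr (1 - \<alpha>) - (y + b) powr (1 - \<alpha>)"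
proof -
  have "\<exists>z. y < z \<and> z < y + b \<and>
      (y + b) powr (1 - \<alpha>) - y powr (1 - \<alpha>) = (y + b - y) * ((1 - \<alpha>) * z powr (1 - \<alpha> - 1))"
  proof (rule MVT2)
    show "y < y + b" using b by simp
    fix x assume "y \<le> x" "x \<le> y + b"
    then have "x > 0" using y by simp
    then show "((\<lambda>a. a powr (1 - \<alpha>)) has_real_derivative (1 - \<alpha>) * x powr (1 - \<alpha> - 1)) (at x)"
      by (rule has_real_derivative_powr)
  qed
  then obtain z where z: "y < z" "z < y + b"
    and eq: "(y + b) powr (1 - \<alpha>) - y powr (1 - \<alpha>) = b * ((1 - \<alpha>) * z powr (- \<alpha>))"
    by auto
  have "(y + b) powr (- \<alpha>) \<le> z powr (- \<alpha>)" using z y \<alpha> by (intro powr_mono2') auto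
  then have "b * (\<alpha> - 1) * (y + b) powr (- \<alpha>) \<le> b * (\<alpha> - 1) * z powr (- \<alpha>)"
    using b \<alpha> by (intro mult_left_mono) auto
  also have "\<dots> = y powr (1 - \<alpha>) - (y + b) powr (1 - \<alpha>)" using eq by (simp add: algebra_simps)
  finally show ?thesis .
qed

lemma case2_sum:
  fixes A b \<alpha> :: real
  assumes A: "A \<ge> 1" and b: "b > 0" and \<alpha>: "\<alpha> > 1"
  shows "(\<Sum>j<J. (A + b * real j) powr (- \<alpha>)) \<le> (1 + 1 / (b * (\<alpha> - 1))) * A powr (1 - \<alpha>)"
proof -
  let ?c = "b * (\<alpha> - 1)"
  have c: "?c > 0" using b \<alpha> by simp
  have ind: "(\<Sum>j<Suc K. (A + b * real j) powr (- \<alpha>))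
        \<le> A powr (- \<alpha>) + (A powr (1 - \<alpha>) - (A + b * real K) powr (1 - \<alpha>)) / ?c" for K
  proof (induction K)
    case 0 then show ?case by simp
  next
    case (Suc K)
    have y: "A + b * real K > 0" using A b by (simp add: add_pos_nonneg)
    have "?c * (A + b * real K + b) powr (- \<alpha>)
        \<le> (A + b * real K) powr (1 - \<alpha>) - (A + b * real K + b) powr (1 - \<alpha>)"
      using mvt_step[OF y b \<alpha>] by simp
    then have st: "(A + b * real (Suc K)) powr (- \<alpha>)
        \<le> ((A + b * real K) powr (1 - \<alpha>) - (A + b * real (Suc K)) powr (1 - \<alpha>)) / ?c"
      using c by (simp add: field_simps)
    have "(\<Sum>j<Suc (Suc K). (A + b * real j) powr (- \<alpha>))
        = (\<Sum>j<Suc K. (A + b * real j) powr (- \<alpha>)) + (A + b * real (Suc K)) powr (- \<alpha>)"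
      by simp
    also have "\<dots> \<le> A powr (- \<alpha>) + (A powr (1 - \<alpha>) - (A + b * real K) powr (1 - \<alpha>)) / ?c
        + ((A + b * real K) powr (1 - \<alpha>) - (A + b * real (Suc K)) powr (1 - \<alpha>)) / ?c"
      using Suc.IH st by linarith
    also have "\<dots> = A powr (- \<alpha>) + (A powr (1 - \<alpha>) - (A + b * real (Suc K)) powr (1 - \<alpha>)) / ?c"
      by (simp add: diff_divide_distrib)
    finally show ?case .
  qed
  have A1: "A powr (- \<alpha>) \<le> A powr (1 - \<alpha>)" using A by (intro powr_mono) auto
  have pos: "0 \<le> A powr (1 - \<alpha>) / ?c" using c by simp
  show ?thesis
  proof (cases J)
    case 0
    then show ?thesis using pos A1 by (simp add: field_simps)
  next
    case (Suc K)
    have "(\<Sum>j<J. (A + b * real j) powr (- \<alpha>))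
        \<le> A powr (- \<alpha>) + (A powr (1 - \<alpha>) - (A + b * real K) powr (1 - \<alpha>)) / ?c"
      using ind Suc by blast
    also have "\<dots> \<le> A powr (1 - \<alpha>) + A powr (1 - \<alpha>) / ?c"
    proof -
      have "(A powr (1 - \<alpha>) - (A + b * real K) powr (1 - \<alpha>)) / ?c \<le> A powr (1 - \<alpha>) / ?c"
        using c by (intro divide_right_mono) auto
      then show ?thesis using A1 by linarith
    qed
    also have "\<dots> = (1 + 1 / ?c) * A powr (1 - \<alpha>)" by (simp add: field_simps)
    finally show ?thesis .
  qed
qed


lemma cube0_dc: "cube0 a l = dc a l 0 0"
  unfolding cube0_def dc_def by simp

lemma okj00: "okj 0 0"
  unfolding okj_def by simp

lemma cube0_dyadic: "cube0 a l \<in> dyadic_cubes a l"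
  using cube0_dc okj00 dyadic_cubes_iff by metis

lemma cube0_measure:
  fixes a :: "real^'n"
  assumes "l > 0" shows "measure lebesgue (cube0 a l) = l ^ CARD('n)"
  unfolding cube0_dc using dc_measure[OF assms, of a 0 0] by simp

lemma sN_le:
  fixes a :: "real^'n" and f :: "real^'n \<Rightarrow> real"
  assumes B: "B \<ge> 0"
    and h: "\<And>\<Q> F. sparse_family a l \<Q> \<Longrightarrow> finite F \<Longrightarrow>
              F \<subseteq> {Q \<in> \<Q>. cube_side Q \<le> 2 powr (- (real N - 1)) * l} \<Longrightarrow>
              (\<Sum>Q\<in>F. (measure lebesgue Q powr (1 / real CARD('n) - 1/2)
                             * integral Q (\<lambda>x. \<bar>f x\<bar>))\<^sup>2) \<le> B"
  shows "sN a l N f \<le> ereal (sqrt B)"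
proof -
  have le: "sN_sq a l N f \<le> ereal B"
    unfolding sN_sq_def
  proof (rule SUP_least)
    fix \<Q> assume "\<Q> \<in> Collect (sparse_family a l)"
    then have sp: "sparse_family a l \<Q>" by simp
    show "(SUP F \<in> {F. finite F \<and> F \<subseteq> {Q \<in> \<Q>. cube_side Q \<le> 2 powr (- (real N - 1)) * l}}.
          ereal (\<Sum>Q\<in>F. (measure lebesgue Q powr (1 / real CARD('n) - 1/2)
                             * integral Q (\<lambda>x. \<bar>f x\<bar>))\<^sup>2)) \<le> ereal B"
    proof (rule SUP_least)
      fix F assume F: "F \<in> {F. finite F \<and> F \<subseteq> {Q \<in> \<Q>. cube_side Q \<le> 2 powr (- (real N - 1)) * l}}"
      show "ereal (\<Sum>Q\<in>F. (measure lebesgue Q powr (1 / real CARD('n) - 1/2)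
                             * integral Q (\<lambda>x. \<bar>f x\<bar>))\<^sup>2) \<le> ereal B"
        by (subst ereal_less_eq(3)) (rule h[OF sp]; use F in blast)
    qed
  qed
  then have ninf: "sN_sq a l N f \<noteq> \<infinity>" by auto
  have "real_of_ereal (sN_sq a l N f) \<le> B"
    using le B by (cases "sN_sq a l N f") auto
  then show ?thesis unfolding sN_def using ninf by simp
qed

lemma sN_morrey_bound:
  fixes a :: "real^'n"
  assumes l: "l > 0" and N: "N \<ge> 1" and Sb: "Sb \<ge> 0" and K0: "K0 \<ge> 0"
    and hS: "\<And>M. (\<Sum>k\<in>{N-1..M}. wk CARD('n) l (2 / real CARD('n) - pinv p) \<alpha> k) \<le> Sb"
    and hK: "\<And>f. morrey_norm a l p \<alpha> f \<le> 1 \<Longrightarrow> integral (cube0 a l) (\<lambda>x. \<bar>f x\<bar>) \<le> K0"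
  shows "sN_morrey a l N p \<alpha> \<le> ereal (sqrt (K0 * Sb))"
  unfolding sN_morrey_def
proof (rule SUP_least)
  fix f :: "real^'n \<Rightarrow> real"
  assume "f \<in> {f. f absolutely_integrable_on cube0 a l \<and> morrey_norm a l p \<alpha> f \<le> 1}"
  then have f: "f absolutely_integrable_on cube0 a l" and mor: "morrey_norm a l p \<alpha> f \<le> 1" by auto
  have I0: "0 \<le> integral (cube0 a l) (\<lambda>x. \<bar>f x\<bar>)"
    using abs_integrable_cube[OF f] by (rule integral_nonneg) auto
  show "sN a l N f \<le> ereal (sqrt (K0 * Sb))"
  proof (rule sN_le)
    show "0 \<le> K0 * Sb" using K0 Sb by simp
    fix \<Q> F assume sp: "sparse_family a l \<Q>" and fin: "finite F"
      and sub: "F \<subseteq> {Q \<in> \<Q>. cube_side Q \<le> 2 powr (- (real N - 1)) * l}"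
    have "\<Q> \<subseteq> dyadic_cubes a l" using sp unfolding sparse_family_def by (elim conjE) assumption
    then have Fd: "F \<subseteq> dyadic_cubes a l" using sub by blast
    have side: "\<forall>Q\<in>F. cube_side Q \<le> 2 powr (- (real N - 1)) * l" using sub by blast
    from F_bound[OF l f mor N fin Fd side] obtain M where M: "(\<Sum>Q\<in>F. (measure lebesgue Q powr (1 / real CARD('n) - 1/2)
                             * integral Q (\<lambda>x. \<bar>f x\<bar>))\<^sup>2)
          \<le> integral (cube0 a l) (\<lambda>x. \<bar>f x\<bar>)
             * (\<Sum>k\<in>{N-1..M}. wk CARD('n) l (2 / real CARD('n) - pinv p) \<alpha> k)"
      ..
    also have "\<dots> \<le> K0 * Sb"
      by (rule mult_mono[OF hK[OF mor] hS K0]) (simp add: sum_nonneg wk_nonneg)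
    finally show "(\<Sum>Q\<in>F. (measure lebesgue Q powr (1 / real CARD('n) - 1/2)
                             * integral Q (\<lambda>x. \<bar>f x\<bar>))\<^sup>2) \<le> K0 * Sb" .
  qed
qed

lemma K0_bound:
  fixes a :: "real^'n" and f :: "real^'n \<Rightarrow> real"
  assumes l: "l > 0" and mor: "morrey_norm a l p \<alpha> f \<le> 1"
  shows "integral (cube0 a l) (\<lambda>x. \<bar>f x\<bar>) \<le> (l ^ CARD('n)) powr (1 - pinv p)
            * (1 - min (ln (l ^ CARD('n))) 0) powr (- \<alpha>)"
proof -
  have m: "measure lebesgue (cube0 a l) > 0" using cube0_measure[OF l, of a] l by simp
  show ?thesis using morrey_bound[OF mor cube0_dyadic m] unfolding cube0_measure[OF l] .
qed


lemma wk_shift: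
  fixes l s \<alpha> :: real and d N j :: nat
  assumes l: "l > 0" and d: "d > 0" and N: "N \<ge> 1"
    and t: "real (N - 1) * ln 2 - ln l > 0"
  shows "wk d l s \<alpha> (N - 1 + j) = exp (- s * d * (real (N - 1) * ln 2 - ln l))
           * (exp (- (s * d * ln 2) * real j)
              * (1 + d * (real (N - 1) * ln 2 - ln l) + d * ln 2 * real j) powr (- \<alpha>))"
proof -
  define t where "t = real (N - 1) * ln 2 - ln l"
  have t0: "t > 0" using t unfolding t_def .
  define k where "k = N - 1 + j"
  define h where "h = l / 2 ^ k"
  have h: "h > 0" unfolding h_def using l by simp
  have lnh: "ln (h ^ d) = - (d * (t + ln 2 * real j))"
  proof -
    have "ln (h ^ d) = d * ln h" using h by (simp add: ln_realpow)
    also have "ln h = ln l - real k * ln 2" unfolding h_def using l by (simp add: ln_div ln_realpow)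
    also have "real k = real (N - 1) + real j" unfolding k_def by simp
    finally show ?thesis unfolding t_def by (simp add: algebra_simps)
  qed
  have neg: "ln (h ^ d) < 0" unfolding lnh using t0 d by (simp add: add_pos_nonneg)
  have p1: "(h ^ d) powr s = exp (- s * d * t) * exp (- (s * d * ln 2) * real j)"
    using h by (simp add: powr_def lnh exp_add[symmetric] algebra_simps)
  have p2: "1 - min (ln (h ^ d)) 0 = 1 + d * t + d * ln 2 * real j"
    using neg unfolding lnh by (simp add: algebra_simps)
  show ?thesis
    unfolding wk_def k_def[symmetric] h_def[symmetric] p1 p2 t_def[symmetric] by (simp add: mult.assoc)
qed

lemma wk_sum:
  fixes l s \<alpha> :: real and d N M :: nat
  assumes l: "l > 0" and d: "d > 0" and N: "N \<ge> 1"
    and t: "real (N - 1) * ln 2 - ln l > 0"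
  shows "(\<Sum>k\<in>{N-1..M}. wk d l s \<alpha> k) = exp (- s * d * (real (N - 1) * ln 2 - ln l))
           * (\<Sum>j<Suc M - (N - 1). exp (- (s * d * ln 2) * real j)
              * (1 + d * (real (N - 1) * ln 2 - ln l) + d * ln 2 * real j) powr (- \<alpha>))"
proof -
  have "(\<Sum>k\<in>{N-1..M}. wk d l s \<alpha> k) = (\<Sum>k\<in>{N-1..<Suc M}. wk d l s \<alpha> k)"
    by (simp add: atLeastLessThanSuc_atLeastAtMost)
  also have "\<dots> = (\<Sum>j\<in>{0..<Suc M - (N - 1)}. wk d l s \<alpha> (N - 1 + j))"
    by (subst sum.atLeastLessThan_shift_0) (simp add: comp_def)
  also have "\<dots> = (\<Sum>j<Suc M - (N - 1). exp (- s * d * (real (N - 1) * ln 2 - ln l))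
           * (exp (- (s * d * ln 2) * real j)
              * (1 + d * (real (N - 1) * ln 2 - ln l) + d * ln 2 * real j) powr (- \<alpha>)))"
    unfolding atLeast0LessThan by (rule sum.cong[OF refl]) (rule wk_shift[OF l d N t])
  also have "\<dots> = exp (- s * d * (real (N - 1) * ln 2 - ln l))
           * (\<Sum>j<Suc M - (N - 1). exp (- (s * d * ln 2) * real j)
              * (1 + d * (real (N - 1) * ln 2 - ln l) + d * ln 2 * real j) powr (- \<alpha>))"
    by (simp add: sum_distrib_left)
  finally show ?thesis .
qed

lemma pow_compare:
  fixes A x c \<beta> :: real
  assumes A: "A > 0" and x: "x > 0" and c: "c \<ge> 1" and h1: "x \<le> c * A" and h2: "A \<le> c * x"
  shows "A powr (- \<beta>) \<le> c powr \<bar>\<beta>\<bar> * x powr (- \<beta>)"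
proof (cases "\<beta> \<ge> 0")
  case True
  have "x / c \<le> A" using h1 c by (simp add: field_simps)
  then have "A powr (- \<beta>) \<le> (x / c) powr (- \<beta>)" using True x c by (intro powr_mono2') auto
  also have "\<dots> = c powr \<beta> * x powr (- \<beta>)" using x c
    by (simp add: powr_divide powr_minus divide_simps)
  finally show ?thesis using True by simp
next
  case False
  have "A powr (- \<beta>) \<le> (c * x) powr (- \<beta>)" using False A h2 by (intro powr_mono2) auto
  also have "\<dots> = c powr (- \<beta>) * x powr (- \<beta>)" using x c by (simp add: powr_mult)
  finally show ?thesis using False by simp
qed

lemma A_compare:
  fixes l :: real and d N :: nat
  assumes l: "l > 0" and d: "d > 0" and N: "N \<ge> 1"
    and t: "real (N - 1) * ln 2 - ln l > 0"
  defines "c \<equiv> 1 + (1 + \<bar>ln l\<bar>) / ln 2 + d * ln 2 + d * \<bar>ln l\<bar>"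
  defines "A \<equiv> 1 + d * (real (N - 1) * ln 2 - ln l)"
  shows "A \<ge> 1" "c \<ge> 1" "real N \<le> c * A" "A \<le> c * real N"
proof -
  define t where "t = real (N - 1) * ln 2 - ln l"
  have t0: "t > 0" using t unfolding t_def .
  have ln2: "ln (2::real) > 0" by simp
  have dd: "real d \<ge> 1" using d by simp
  have At: "A \<ge> 1 + t" unfolding A_def t_def[symmetric] using dd t0
    by (metis add_le_cancel_left mult_le_cancel_right1 less_imp_le not_le)
  then show "A \<ge> 1" using t0 by simp
  have c1: "(1 + \<bar>ln l\<bar>) / ln 2 \<ge> 0" "d * ln 2 \<ge> 0" "d * \<bar>ln l\<bar> \<ge> 0" using ln2 by simp_all
  then show c: "c \<ge> 1" unfolding c_def by simp
  have NN: "real N = 1 + (t + ln l) / ln 2"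
    using N ln2 unfolding t_def by (simp add: field_simps of_nat_diff)
  have "real N \<le> 1 + (t + \<bar>ln l\<bar>) / ln 2" unfolding NN using ln2
    by (intro add_left_mono divide_right_mono) auto
  also have "\<dots> \<le> (1 + (1 + \<bar>ln l\<bar>) / ln 2) * (1 + t)"
  proof -
    have "(t + \<bar>ln l\<bar>) \<le> (1 + \<bar>ln l\<bar>) * (1 + t)" using t0 by (simp add: algebra_simps)
    then have "(t + \<bar>ln l\<bar>) / ln 2 \<le> (1 + \<bar>ln l\<bar>) * (1 + t) / ln 2" using ln2
      by (intro divide_right_mono) auto
    then show ?thesis using t0 by (simp add: algebra_simps)
  qed
  also have "\<dots> \<le> c * A"
    using At t0 c1 unfolding c_def by (intro mult_mono) auto
  finally show "real N \<le> c * A" .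
  have "\<bar>real d * ln l\<bar> = real d * \<bar>ln l\<bar>" by (simp add: abs_mult)
  then have "- (real d * ln l) \<le> real d * \<bar>ln l\<bar>" by (metis abs_ge_minus_self)
  then have "A \<le> 1 + d * real (N - 1) * ln 2 + d * \<bar>ln l\<bar>" unfolding A_def
    by (simp add: algebra_simps)
  also have "\<dots> \<le> real N * (1 + d * ln 2 + d * \<bar>ln l\<bar>)"
  proof -
    have "real (N - 1) \<le> real N" by simp
    then have "real (N - 1) * (d * ln 2) \<le> real N * (d * ln 2)" using ln2
      by (intro mult_right_mono) auto
    then have "d * real (N - 1) * ln 2 \<le> real N * (d * ln 2)" by (simp add: algebra_simps)
    moreover have "1 * (d * \<bar>ln l\<bar>) \<le> real N * (d * \<bar>ln l\<bar>)" using N c1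
      by (intro mult_right_mono) auto
    moreover have "1 \<le> real N" using N by simp
    moreover have "real N * (1 + d * ln 2 + d * \<bar>ln l\<bar>) = real N + real N * (d * ln 2) + real N * (d * \<bar>ln l\<bar>)"
      by (simp add: algebra_simps)
    ultimately show ?thesis by linarith
  qed
  also have "\<dots> \<le> real N * c" unfolding c_def using N c1 by (intro mult_left_mono) auto
  finally show "A \<le> c * real N" by (simp add: mult.commute)
qed


lemma sqrt_prod3:
  fixes K x y :: real
  assumes "K \<ge> 0" "x \<ge> 0" "y > 0"
  shows "sqrt (K * (exp x' * y powr e)) = sqrt K * (exp (x' / 2) * y powr (e / 2))"
proof -
  have "sqrt (exp x') = exp (x' / 2)"
    by (rule real_sqrt_unique) (simp_all add: power2_eq_square exp_add[symmetric])
  moreover have "sqrt (y powr e) = y powr (e / 2)"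
    by (rule real_sqrt_unique) (use assms in \<open>simp_all add: power2_eq_square powr_add[symmetric]\<close>)
  ultimately show ?thesis by (simp add: real_sqrt_mult)
qed

theorem proposition5p2:
  fixes a :: "real^'n" and l :: real and p :: ereal and \<alpha> :: real
  assumes "CARD('n) \<ge> 2" and "l > 0" and "p \<ge> 1"
  shows "(p > ereal (real CARD('n) / 2) \<longrightarrow>
            (\<exists>C::real. \<forall>N::nat. N \<ge> 1 \<longrightarrow>
               2 powr ((real N - 1) * real CARD('n)) > measure lebesgue (cube0 a l) \<longrightarrow>
               sN_morrey a l N p \<alpha> \<le>
                 ereal (C * (2 powr (- real N * (2 / real CARD('n) - pinv p) * (real CARD('n) / 2))
                             * real N powr (- \<alpha> / 2)))))
       \<and> (p = ereal (real CARD('n) / 2) \<and> \<alpha> > 1 \<longrightarrow>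
            (\<exists>C::real. \<forall>N::nat. N \<ge> 1 \<longrightarrow>
               2 powr ((real N - 1) * real CARD('n)) > measure lebesgue (cube0 a l) \<longrightarrow>
               sN_morrey a l N p \<alpha> \<le> ereal (C * real N powr ((1 - \<alpha>) / 2))))"
proof -
  let ?d = "CARD('n)"
  have l: "l > 0" by fact
  have d0: "?d > 0" by simp
  have ln2: "ln (2::real) > 0" by simp
  have tN: "real (N - 1) * ln 2 - ln l > 0"
    if N: "N \<ge> 1" and cond: "2 powr ((real N - 1) * real ?d) > measure lebesgue (cube0 a l)" for N
  proof -
    have "l ^ ?d < 2 powr ((real N - 1) * real ?d)" using cond cube0_measure[OF l, of a] by simp
    then have "ln (l ^ ?d) < ln (2 powr ((real N - 1) * real ?d))" using l
      by (subst ln_less_cancel_iff) auto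
    then have "real ?d * ln l < (real N - 1) * real ?d * ln 2" using l by (simp add: ln_realpow ln_powr)
    then have "real ?d * ln l < real ?d * (real (N - 1) * ln 2)" using N by (simp add: of_nat_diff algebra_simps)
    then show ?thesis using d0 by simp
  qed
  define K0 where "K0 = (l ^ ?d) powr (1 - pinv p) * (1 - min (ln (l ^ ?d)) 0) powr (- \<alpha>)"
  have K0: "K0 \<ge> 0" unfolding K0_def by simp
  have hK: "integral (cube0 a l) (\<lambda>x. \<bar>f x\<bar>) \<le> K0" if "morrey_norm a l p \<alpha> f \<le> 1" for f
    unfolding K0_def by (rule K0_bound[OF l that])
  define c where "c = 1 + (1 + \<bar>ln l\<bar>) / ln 2 + ?d * ln 2 + ?d * \<bar>ln l\<bar>"
  define b where "b = real ?d * ln 2"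
  have b: "b > 0" unfolding b_def using ln2 by simp
  show ?thesis
  proof (intro conjI impI)
    assume p: "p > ereal (real ?d / 2)"
    define s where "s = 2 / real ?d - pinv p"
    have s: "s > 0"
    proof (cases "p = \<infinity>")
      case True then show ?thesis unfolding s_def pinv_def by simp
    next
      case False
      then obtain r where r: "p = ereal r" using assms(3) by (cases p) auto
      then have "r > real ?d / 2" using p by simp
      then have "1 / r < 2 / real ?d" using d0 by (simp add: field_simps)
      then show ?thesis unfolding s_def pinv_def using r by simp
    qed
    define q where "q = s * real ?d * ln 2"
    have q: "q > 0" unfolding q_def using s ln2 by simp
    define \<beta> where "\<beta> = max (- \<alpha>) 0"
    define \<delta> where "\<delta> = (if \<beta> = 0 then 1 else min 1 (q / (2 * \<beta> * b)))"
    define D1 where "D1 = \<delta> powr (- \<beta>) / (1 - exp (- q / 2))"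
    have D1: "D1 \<ge> 0" unfolding D1_def using q by simp
    define E where "E = exp (s * ?d * ln 2) * exp (s * ?d * ln l) * c powr \<bar>\<alpha>\<bar> * D1"
    have E: "E \<ge> 0" unfolding E_def using D1 by simp
    show "\<exists>C::real. \<forall>N::nat. N \<ge> 1 \<longrightarrow>
               2 powr ((real N - 1) * real CARD('n)) > measure lebesgue (cube0 a l) \<longrightarrow>
               sN_morrey a l N p \<alpha> \<le>
                 ereal (C * (2 powr (- real N * (2 / real CARD('n) - pinv p) * (real CARD('n) / 2))
                             * real N powr (- \<alpha> / 2)))"
    proof (intro exI allI impI)
      fix N :: nat assume N: "N \<ge> 1"
        and cond: "2 powr ((real N - 1) * real ?d) > measure lebesgue (cube0 a l)"
      have t: "real (N - 1) * ln 2 - ln l > 0" by (rule tN[OF N cond])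
      define t' where "t' = real (N - 1) * ln 2 - ln l"
      define A where "A = 1 + ?d * t'"
      note AC = A_compare[OF l d0 N t, folded c_def t'_def, folded A_def]
      have Npos: "real N > 0" using N by simp
      define Sb where "Sb = E * (exp (- (real N * s * ?d * ln 2)) * real N powr (- \<alpha>))"
      have Sb: "Sb \<ge> 0" unfolding Sb_def using E by simp
      have hS: "(\<Sum>k\<in>{N-1..M}. wk ?d l (2 / real ?d - pinv p) \<alpha> k) \<le> Sb" for M
      proof -
        have "(\<Sum>k\<in>{N-1..M}. wk ?d l s \<alpha> k) = exp (- s * ?d * t')
           * (\<Sum>j<Suc M - (N - 1). exp (- q * real j) * (A + b * real j) powr (- \<alpha>))"
          unfolding wk_sum[OF l d0 N t] t'_def[symmetric] A_def q_def b_def by (simp add: mult.assoc)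
        also have "\<dots> \<le> exp (- s * ?d * t') * (A powr (- \<alpha>) * D1)"
          unfolding D1_def \<delta>_def \<beta>_def
          by (intro mult_left_mono case1_sum AC(1) b q) simp
        also have "\<dots> \<le> exp (- s * ?d * t') * ((c powr \<bar>\<alpha>\<bar> * real N powr (- \<alpha>)) * D1)"
          using AC Npos D1 by (intro mult_left_mono mult_right_mono pow_compare) auto
        also have "\<dots> = Sb"
        proof -
          have "- s * ?d * t' = s * ?d * ln 2 + s * ?d * ln l + (- (real N * s * ?d * ln 2))"
            unfolding t'_def using N by (simp add: of_nat_diff algebra_simps)
          then have "exp (- s * ?d * t') = exp (s * ?d * ln 2) * exp (s * ?d * ln l) * exp (- (real N * s * ?d * ln 2))"
            by (simp add: exp_add[symmetric])
          then show ?thesis unfolding Sb_def E_def by (simp add: algebra_simps)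
        qed
        finally show ?thesis unfolding s_def .
      qed
      have "sN_morrey a l N p \<alpha> \<le> ereal (sqrt (K0 * Sb))"
        by (rule sN_morrey_bound[OF l N Sb K0 hS hK])
      also have "sqrt (K0 * Sb) = sqrt (K0 * E) * (exp (- (real N * s * ?d * ln 2) / 2) * real N powr (- \<alpha> / 2))"
        unfolding Sb_def using sqrt_prod3[of "K0 * E" 0 "real N" "- (real N * s * ?d * ln 2)" "- \<alpha>"] K0 E Npos
        by (simp add: mult.assoc)
      also have "exp (- (real N * s * ?d * ln 2) / 2) = 2 powr (- real N * (2 / real CARD('n) - pinv p) * (real CARD('n) / 2))"
      proof -
        have "- (real N * s * ?d * ln 2) / 2 = (- real N * s * (real ?d / 2)) * ln 2"
          by (simp add: algebra_simps)
        then show ?thesis unfolding s_def[symmetric] by (simp add: powr_def)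
      qed
      finally show "sN_morrey a l N p \<alpha> \<le>
                 ereal (sqrt (K0 * E) * (2 powr (- real N * (2 / real CARD('n) - pinv p) * (real CARD('n) / 2))
                             * real N powr (- \<alpha> / 2)))" .
    qed
  next
    assume pa: "p = ereal (real ?d / 2) \<and> \<alpha> > 1"
    then have \<alpha>: "\<alpha> > 1" by simp
    have s0: "2 / real ?d - pinv p = 0" using pa unfolding pinv_def by simp
    define E2 where "E2 = (1 + 1 / (b * (\<alpha> - 1))) * c powr \<bar>\<alpha> - 1\<bar>"
    have E2: "E2 \<ge> 0" unfolding E2_def using b \<alpha> by simp
    show "\<exists>C::real. \<forall>N::nat. N \<ge> 1 \<longrightarrow>
               2 powr ((real N - 1) * real CARD('n)) > measure lebesgue (cube0 a l) \<longrightarrow>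
               sN_morrey a l N p \<alpha> \<le> ereal (C * real N powr ((1 - \<alpha>) / 2))"
    proof (intro exI allI impI)
      fix N :: nat assume N: "N \<ge> 1"
        and cond: "2 powr ((real N - 1) * real ?d) > measure lebesgue (cube0 a l)"
      have t: "real (N - 1) * ln 2 - ln l > 0" by (rule tN[OF N cond])
      define t' where "t' = real (N - 1) * ln 2 - ln l"
      define A where "A = 1 + ?d * t'"
      note AC = A_compare[OF l d0 N t, folded c_def t'_def, folded A_def]
      have Npos: "real N > 0" using N by simp
      define Sb where "Sb = E2 * (exp 0 * real N powr (1 - \<alpha>))"
      have Sb: "Sb \<ge> 0" unfolding Sb_def using E2 by simp
      have hS: "(\<Sum>k\<in>{N-1..M}. wk ?d l (2 / real ?d - pinv p) \<alpha> k) \<le> Sb" for M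
      proof -
        have "(\<Sum>k\<in>{N-1..M}. wk ?d l (2 / real ?d - pinv p) \<alpha> k)
           = (\<Sum>j<Suc M - (N - 1). (A + b * real j) powr (- \<alpha>))"
          unfolding s0 wk_sum[OF l d0 N t] t'_def[symmetric] A_def b_def by (simp add: mult.assoc)
        also have "\<dots> \<le> (1 + 1 / (b * (\<alpha> - 1))) * A powr (1 - \<alpha>)"
          by (rule case2_sum[OF AC(1) b \<alpha>])
        also have "\<dots> \<le> (1 + 1 / (b * (\<alpha> - 1))) * (c powr \<bar>\<alpha> - 1\<bar> * real N powr (1 - \<alpha>))"
        proof (rule mult_left_mono)
          show "A powr (1 - \<alpha>) \<le> c powr \<bar>\<alpha> - 1\<bar> * real N powr (1 - \<alpha>)"
            using pow_compare[of A "real N" c "\<alpha> - 1"] AC Npos by simp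
          show "0 \<le> 1 + 1 / (b * (\<alpha> - 1))" using b \<alpha> by simp
        qed
        also have "\<dots> = Sb" unfolding Sb_def E2_def by simp
        finally show ?thesis .
      qed
      have "sN_morrey a l N p \<alpha> \<le> ereal (sqrt (K0 * Sb))"
        by (rule sN_morrey_bound[OF l N Sb K0 hS hK])
      also have "sqrt (K0 * Sb) = sqrt (K0 * E2) * (exp (0 / 2) * real N powr ((1 - \<alpha>) / 2))"
        unfolding Sb_def using sqrt_prod3[of "K0 * E2" 0 "real N" 0 "1 - \<alpha>"] K0 E2 Npos
        by (simp add: mult.assoc)
      finally show "sN_morrey a l N p \<alpha> \<le> ereal (sqrt (K0 * E2) * real N powr ((1 - \<alpha>) / 2))"
        by simp
    qed
  qed
qed

end
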